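(* Let $(X,Y)$ be a random vector with density $f$ as in the context. Then the Pearson correlation is $\rho(X,Y)=\rho_1$, and the maximal correlation coefficient satisfies $R(X,Y)=\sup_{n\ge1}|\rho_n|$.
   Context: Let $f_1,f_2$ be probability densities (w.r.t. Lebesgue measure on $\mathbb{R}$) with bounded supports, $\mathrm{supp}(f_i)\subseteq[\alpha_i,\omega_i]$, $-\infty<\alpha_i<\omega_i<\infty$ ($i=1,2$). Let $\{\phi_n\}_{n\ge0}$ be the orthonormal polynomial system in $L_2(f_1(x)dx)$ with $\deg\phi_n=n$ and leading coefficient $p_n>0$, and $\{\psi_n\}_{n\ge0}$ the orthonormal polynomial system in $L_2(f_2(y)dy)$ with $\deg\psi_n=n$ and leading coefficient $q_n>0$. Let $c_n=\sup_{\alpha_1\le x\le\omega_1}|\phi_n(x)|$ and $d_n=\sup_{\alpha_2\le y\le\omega_2}|\psi_n(y)|$ for $n\ge1$. Let $\{\rho_n\}_{n\ge1}$ be a real sequence with $\sum_{n=1}^\infty|\rho_n|c_nd_n\le 1$. Define $f(x,y)=f_1(x)f_2(y)\bigl(1+\sum_{n=1}^\infty\rho_n\phi_n(x)\psi_n(y)\bigr)$ for $(x,y)\in[\alpha_1,\omega_1]\times[\alpha_2,\omega_2]$ and $f(x,y)=0$ otherwise; this is a bivariate probability density with marginals $f_1,f_2$. The Pearson correlation is $\rho(X,Y)=\mathrm{Cov}(X,Y)/\sqrt{\mathrm{Var}(X)\mathrm{Var}(Y)}$. For a non-degenerate random variable $W$, $L_2^*(W)$ denotes the class of measurable $g:\mathbb{R}\to\mathbb{R}$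 with $0<\mathrm{Var}[g(W)]<\infty$, and the maximal correlation is $R(X,Y)=\sup_{g_1\in L_2^*(X),\,g_2\in L_2^*(Y)}\rho(g_1(X),g_2(Y))$. *)

theory Defs
  imports "HOL-Probability.Probability" "HOL-Computational_Algebra.Polynomial"
begin

definition covar :: "'a measure \<Rightarrow> ('a \<Rightarrow> real) \<Rightarrow> ('a \<Rightarrow> real) \<Rightarrow> real" where
  "covar M U V = (\<integral>\<omega>. (U \<omega> - (\<integral>\<omega>'. U \<omega>' \<partial>M)) * (V \<omega> - (\<integral>\<omega>'. V \<omega>' \<partial>M)) \<partial>M)"

definition var :: "'a measure \<Rightarrow> ('a \<Rightarrow> real) \<Rightarrow> real" where
  "var M U = covar M U U"

definition pearson :: "'a measure \<Rightarrow> ('a \<Rightarrow> real) \<Rightarrow> ('a \<Rightarrow> real) \<Rightarrow> real" where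
  "pearson M U V = covar M U V / sqrt (var M U * var M V)"

definition L2star :: "'a measure \<Rightarrow> ('a \<Rightarrow> real) \<Rightarrow> (real \<Rightarrow> real) set" where
  "L2star M W = {g. g \<in> borel_measurable borel \<and> integrable M (\<lambda>\<omega>. (g (W \<omega>))\<^sup>2)
                     \<and> 0 < var M (\<lambda>\<omega>. g (W \<omega>))}"

definition maxcorr :: "'a measure \<Rightarrow> ('a \<Rightarrow> real) \<Rightarrow> ('a \<Rightarrow> real) \<Rightarrow> real" where
  "maxcorr M X Y = Sup {pearson M (\<lambda>\<omega>. g1 (X \<omega>)) (\<lambda>\<omega>. g2 (Y \<omega>)) | g1 g2.
                          g1 \<in> L2star M X \<and> g2 \<in> L2star M Y}"

definition bounded_support_density :: "(real \<Rightarrow> real) \<Rightarrow> real \<Rightarrow> real \<Rightarrow> bool" where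
  "bounded_support_density g a b \<longleftrightarrow>
     a < b \<and> g \<in> borel_measurable lborel \<and> (\<forall>x. 0 \<le> g x) \<and> integrable lborel g \<and>
     (\<integral>x. g x \<partial>lborel) = 1 \<and> (\<forall>x. x \<notin> {a..b} \<longrightarrow> g x = 0)"

definition orthonormal_poly_system :: "(real \<Rightarrow> real) \<Rightarrow> (nat \<Rightarrow> real poly) \<Rightarrow> bool" where
  "orthonormal_poly_system g P \<longleftrightarrow>
     (\<forall>n. degree (P n) = n \<and> lead_coeff (P n) > 0) \<and>
     (\<forall>m n. integrable lborel (\<lambda>x. poly (P m) x * poly (P n) x * g x) \<and>
            (\<integral>x. poly (P m) x * poly (P n) x * g x \<partial>lborel) = (if m = n then 1 else 0))"

definition sup_abs_on :: "real poly \<Rightarrow> real \<Rightarrow> real \<Rightarrow> real" where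
  "sup_abs_on p a b = Sup ((\<lambda>x. \<bar>poly p x\<bar>) ` {a..b})"

definition lancaster_density ::
  "(real \<Rightarrow> real) \<Rightarrow> (real \<Rightarrow> real) \<Rightarrow> real \<Rightarrow> real \<Rightarrow> real \<Rightarrow> real \<Rightarrow>
   (nat \<Rightarrow> real poly) \<Rightarrow> (nat \<Rightarrow> real poly) \<Rightarrow> (nat \<Rightarrow> real) \<Rightarrow> real \<Rightarrow> real \<Rightarrow> real" where
  "lancaster_density f1 f2 a1 b1 a2 b2 \<phi> \<psi> \<rho> x y =
     (if x \<in> {a1..b1} \<and> y \<in> {a2..b2}
      then f1 x * f2 y * (1 + (\<Sum>n. \<rho> (Suc n) * poly (\<phi> (Suc n)) x * poly (\<psi> (Suc n)) y))
      else 0)"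

end

theory Submission
  imports Defs
begin


lemma poly_meas[measurable]: "(\<lambda>x. poly (p::real poly) x) \<in> borel_measurable borel"
  using continuous_on_poly[OF continuous_on_id, of UNIV "p::real poly"] by (intro borel_measurable_continuous_onI) simp

lemma poly_meas_lborel[measurable]: "(\<lambda>x. poly (p::real poly) x) \<in> borel_measurable lborel"
  by simp

lemma sup_abs_on_bound:
  assumes "x \<in> {a..b}" shows "\<bar>poly p x\<bar> \<le> sup_abs_on p a b"
proof -
  have "compact ((\<lambda>x. \<bar>poly p x\<bar>) ` {a..b})"
    by (intro compact_continuous_image continuous_intros) auto
  hence "bdd_above ((\<lambda>x. \<bar>poly p x\<bar>) ` {a..b})" by (simp add: bounded_imp_bdd_above compact_imp_bounded)
  thus ?thesis unfolding sup_abs_on_def using assms by (intro cSup_upper) auto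
qed

lemma prod_integrable:
  fixes u v :: "real \<Rightarrow> real"
  assumes u: "integrable lborel u" and v: "integrable lborel v"
  shows "integrable (lborel \<Otimes>\<^sub>M lborel) (\<lambda>(x,y). u x * v y)"
    and "(\<integral>z. (case z of (x,y) \<Rightarrow> u x * v y) \<partial>(lborel \<Otimes>\<^sub>M lborel)) = integral\<^sup>L lborel u * integral\<^sup>L lborel v"
proof -
  have [measurable]: "u \<in> borel_measurable lborel" "v \<in> borel_measurable lborel" using u v by auto
  show I: "integrable (lborel \<Otimes>\<^sub>M lborel) (\<lambda>(x,y). u x * v y)"
  proof (rule lborel_pair.Fubini_integrable)
    show "(\<lambda>(x,y). u x * v y) \<in> borel_measurable (lborel \<Otimes>\<^sub>M lborel)" by measurable
    have "(\<lambda>x. \<integral>y. norm (case (x, y) of (x, y) \<Rightarrow> u x * v y) \<partial>lborel) = (\<lambda>x. \<bar>u x\<bar> * (\<integral>y. \<bar>v y\<bar> \<partial>lborel))"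
      by (simp add: abs_mult)
    moreover have "integrable lborel (\<lambda>x. \<bar>u x\<bar> * (\<integral>y. \<bar>v y\<bar> \<partial>lborel))"
      using u by (intro integrable_mult_left) auto
    ultimately show "integrable lborel (\<lambda>x. \<integral>y. norm (case (x, y) of (x, y) \<Rightarrow> u x * v y) \<partial>lborel)" by simp
    show "AE x in lborel. integrable lborel (\<lambda>y. case (x, y) of (x, y) \<Rightarrow> u x * v y)"
      using v by auto
  qed
  have "(\<integral>z. (case z of (x,y) \<Rightarrow> u x * v y) \<partial>(lborel \<Otimes>\<^sub>M lborel)) = (\<integral>x. (\<integral>y. u x * v y \<partial>lborel) \<partial>lborel)"
    using lborel_pair.integral_fst[of "\<lambda>x y. u x * v y"] I by simp
  also have "\<dots> = integral\<^sup>L lborel u * integral\<^sup>L lborel v" by simp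
  finally show "(\<integral>z. (case z of (x,y) \<Rightarrow> u x * v y) \<partial>(lborel \<Otimes>\<^sub>M lborel)) = integral\<^sup>L lborel u * integral\<^sup>L lborel v" .
qed

lemma dc_series:
  fixes w s :: "'a \<Rightarrow> real" and u :: "nat \<Rightarrow> 'a \<Rightarrow> real"
  assumes w: "integrable N w" and [measurable]: "s \<in> borel_measurable N" "\<And>n. u n \<in> borel_measurable N"
    and conv: "\<And>z. z \<in> space N \<Longrightarrow> w z \<noteq> 0 \<Longrightarrow> (\<lambda>n. u n z) sums s z"
    and bnd: "\<And>z n. z \<in> space N \<Longrightarrow> w z \<noteq> 0 \<Longrightarrow> \<bar>\<Sum>k<n. u k z\<bar> \<le> B"
  shows "integrable N (\<lambda>z. w z * s z)" "(\<lambda>n. \<integral>z. w z * u n z \<partial>N) sums (\<integral>z. w z * s z \<partial>N)"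
proof -
  have [measurable]: "w \<in> borel_measurable N" using w by auto
  define P where "P n z = w z * (\<Sum>k<n. u k z)" for n z
  have Pb: "norm (P n z) \<le> B * \<bar>w z\<bar>" if "z \<in> space N" for n z
    using bnd[OF that, of n] by (cases "w z = 0") (auto simp: P_def abs_mult mult.commute intro: mult_left_mono)
  have lim: "(\<lambda>n. P n z) \<longlonglongrightarrow> w z * s z" if "z \<in> space N" for z
  proof (cases "w z = 0")
    case True thus ?thesis by (simp add: P_def)
  next
    case False
    thus ?thesis using conv[OF that False] unfolding P_def sums_def by (intro tendsto_mult) auto
  qed
  have Bw: "integrable N (\<lambda>z. B * \<bar>w z\<bar>)" using w by auto
  have m1: "(\<lambda>z. w z * s z) \<in> borel_measurable N" "\<And>n. P n \<in> borel_measurable N"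
    unfolding P_def by measurable
  have l1: "AE z in N. (\<lambda>n. P n z) \<longlonglongrightarrow> w z * s z" by (rule AE_I2, rule lim)
  have b1: "\<And>n. AE z in N. norm (P n z) \<le> B * \<bar>w z\<bar>" by (rule AE_I2, rule Pb)
  have DC: "integrable N (\<lambda>z. w z * s z) \<and> (\<lambda>n. integral\<^sup>L N (P n)) \<longlonglongrightarrow> integral\<^sup>L N (\<lambda>z. w z * s z)"
    using integrable_dominated_convergence[OF m1 Bw l1 b1] integral_dominated_convergence[OF m1 Bw l1 b1] by simp
  show "integrable N (\<lambda>z. w z * s z)" using DC by simp
  have uint: "integrable N (\<lambda>z. w z * u n z)" for n
  proof (rule Bochner_Integration.integrable_bound[of _ "\<lambda>z. 2 * B * \<bar>w z\<bar>"])
    show "integrable N (\<lambda>z. 2 * B * \<bar>w z\<bar>)" using w by auto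
    show "(\<lambda>z. w z * u n z) \<in> borel_measurable N" by measurable
    show "AE z in N. norm (w z * u n z) \<le> norm (2 * B * \<bar>w z\<bar>)"
    proof (rule AE_I2)
      fix z assume z: "z \<in> space N"
      have "w z * u n z = P (Suc n) z - P n z" by (simp add: P_def algebra_simps)
      hence "norm (w z * u n z) \<le> norm (P (Suc n) z) + norm (P n z)" by (metis norm_triangle_ineq4)
      also have "\<dots> \<le> 2 * B * \<bar>w z\<bar>" using Pb[OF z, of n] Pb[OF z, of "Suc n"] by simp
      also have "\<dots> \<le> norm (2 * B * \<bar>w z\<bar>)" by simp
      finally show "norm (w z * u n z) \<le> norm (2 * B * \<bar>w z\<bar>)" .
    qed
  qed
  have "integral\<^sup>L N (P n) = (\<Sum>k<n. \<integral>z. w z * u k z \<partial>N)" for n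
    unfolding P_def sum_distrib_left by (rule Bochner_Integration.integral_sum) (rule uint)
  thus "(\<lambda>n. \<integral>z. w z * u n z \<partial>N) sums (\<integral>z. w z * s z \<partial>N)"
    using DC unfolding sums_def by simp
qed


lemma covar_formula:
  assumes M: "prob_space M" and U: "integrable M U" and V: "integrable M V"
    and UV: "integrable M (\<lambda>w. U w * V w)"
  shows "covar M U V = (\<integral>w. U w * V w \<partial>M) - (\<integral>w. U w \<partial>M) * (\<integral>w. V w \<partial>M)"
proof -
  interpret prob_space M by fact
  let ?a = "\<integral>w. U w \<partial>M" and ?b = "\<integral>w. V w \<partial>M"
  have "(\<lambda>w. (U w - ?a) * (V w - ?b)) = (\<lambda>w. U w * V w - ?b * U w - ?a * V w + ?a * ?b)"
    by (auto simp: algebra_simps)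
  hence "covar M U V = (\<integral>w. U w * V w - ?b * U w - ?a * V w + ?a * ?b \<partial>M)"
    unfolding covar_def by simp
  also have "\<dots> = (\<integral>w. U w * V w \<partial>M) - ?b * ?a - ?a * ?b + ?a * ?b"
    using U V UV prob_space by (simp add: Bochner_Integration.integral_add Bochner_Integration.integral_diff)
  finally show ?thesis by (simp add: algebra_simps)
qed

lemma var_formula:
  assumes M: "prob_space M" and U: "integrable M U" and UU: "integrable M (\<lambda>w. (U w)\<^sup>2)"
  shows "var M U = (\<integral>w. (U w)\<^sup>2 \<partial>M) - (\<integral>w. U w \<partial>M)\<^sup>2"
  using covar_formula[OF M U U] UU unfolding var_def by (simp add: power2_eq_square)

lemma covar_affine:
  assumes M: "prob_space M" and U: "integrable M U" and V: "integrable M V"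
  shows "covar M (\<lambda>w. a * U w + b) (\<lambda>w. c * V w + d) = a * c * covar M U V"
proof -
  interpret prob_space M by fact
  have "(\<integral>w. a * U w + b \<partial>M) = a * (\<integral>w. U w \<partial>M) + b" using U prob_space by simp
  moreover have "(\<integral>w. c * V w + d \<partial>M) = c * (\<integral>w. V w \<partial>M) + d" using V prob_space by simp
  ultimately have "covar M (\<lambda>w. a * U w + b) (\<lambda>w. c * V w + d) =
     (\<integral>w. (a * c) * ((U w - (\<integral>w. U w \<partial>M)) * (V w - (\<integral>w. V w \<partial>M))) \<partial>M)"
    unfolding covar_def by (intro Bochner_Integration.integral_cong refl) (simp add: algebra_simps)
  also have "\<dots> = a * c * covar M U V" unfolding covar_def by (rule integral_mult_right_zero)
  finally show ?thesis .
qed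

lemma pearson_affine:
  assumes M: "prob_space M" and U: "integrable M U" and V: "integrable M V" and a: "a > 0" and c: "c > 0"
  shows "pearson M (\<lambda>w. a * U w + b) (\<lambda>w. c * V w + d) = pearson M U V"
proof -
  have 1: "covar M (\<lambda>w. a * U w + b) (\<lambda>w. c * V w + d) = a * c * covar M U V" by (rule covar_affine[OF M U V])
  have 2: "var M (\<lambda>w. a * U w + b) = a * a * var M U" unfolding var_def by (rule covar_affine[OF M U U])
  have 3: "var M (\<lambda>w. c * V w + d) = c * c * var M V" unfolding var_def by (rule covar_affine[OF M V V])
  have "sqrt (a * a * var M U * (c * c * var M V)) = a * c * sqrt (var M U * var M V)"
    using a c by (simp add: real_sqrt_mult power2_eq_square[symmetric] mult_ac)
  thus ?thesis unfolding pearson_def 1 2 3 using a c by simp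
qed


lemma series_cs:
  fixes A B r :: "nat \<Rightarrow> real"
  assumes VU: "\<And>N. (\<Sum>n<N. (A n)\<^sup>2) \<le> VU" and VV: "\<And>N. (\<Sum>n<N. (B n)\<^sup>2) \<le> VV"
    and pu: "VU > 0" and pv: "VV > 0" and r: "\<And>n. \<bar>r n\<bar> \<le> R"
  shows "summable (\<lambda>n. r n * A n * B n)" "(\<Sum>n. r n * A n * B n) \<le> R * sqrt (VU * VV)"
proof -
  define t where "t = sqrt (VV / VU)"
  have t: "t > 0" using pu pv by (simp add: t_def)
  have tt: "t * t = VV / VU" using pu pv by (simp add: t_def)
  have key: "\<bar>A n * B n\<bar> \<le> (t * (A n)\<^sup>2 + (B n)\<^sup>2 / t) / 2" for n
  proof -
    have "0 \<le> (t * \<bar>A n\<bar> - \<bar>B n\<bar>)\<^sup>2 / t" using t by simp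
    also have "\<dots> = t * (A n)\<^sup>2 - 2 * \<bar>A n * B n\<bar> + (B n)\<^sup>2 / t"
      using t by (simp add: power2_eq_square field_simps abs_mult)
    finally show ?thesis by simp
  qed
  have R0: "R \<ge> 0" using r[of 0] by simp
  have sA: "summable (\<lambda>n. (A n)\<^sup>2)"
    by (rule summableI_nonneg_bounded[where x=VU]) (simp, rule VU)
  have sB: "summable (\<lambda>n. (B n)\<^sup>2)"
    by (rule summableI_nonneg_bounded[where x=VV]) (simp, rule VV)
  have sAU: "(\<Sum>n. (A n)\<^sup>2) \<le> VU" using sA VU by (rule suminf_le_const)
  have sBV: "(\<Sum>n. (B n)\<^sup>2) \<le> VV" using sB VV by (rule suminf_le_const)
  have sA': "summable (\<lambda>n. t * (A n)\<^sup>2)" using sA by (rule summable_mult)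
  have sB': "summable (\<lambda>n. (B n)\<^sup>2 / t)" using sB by (rule summable_divide)
  have sAB: "summable (\<lambda>n. (t * (A n)\<^sup>2 + (B n)\<^sup>2 / t))" using sA' sB' by (rule summable_add)
  have sAB2: "summable (\<lambda>n. (t * (A n)\<^sup>2 + (B n)\<^sup>2 / t) / 2)" using sAB by (rule summable_divide)
  have sG: "summable (\<lambda>n. R * ((t * (A n)\<^sup>2 + (B n)\<^sup>2 / t) / 2))" using sAB2 by (rule summable_mult)
  have bnd: "norm (r n * A n * B n) \<le> R * ((t * (A n)\<^sup>2 + (B n)\<^sup>2 / t) / 2)" for n
  proof -
    have "norm (r n * A n * B n) = \<bar>r n\<bar> * \<bar>A n * B n\<bar>" by (simp add: abs_mult)
    also have "\<dots> \<le> R * ((t * (A n)\<^sup>2 + (B n)\<^sup>2 / t) / 2)"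
      using key[of n] r[of n] R0 by (intro mult_mono) auto
    finally show ?thesis .
  qed
  show S: "summable (\<lambda>n. r n * A n * B n)"
    by (rule summable_comparison_test'[OF sG bnd])
  have "(\<Sum>n. r n * A n * B n) \<le> (\<Sum>n. R * ((t * (A n)\<^sup>2 + (B n)\<^sup>2 / t) / 2))"
  proof (rule suminf_le[OF _ S sG])
    fix n show "r n * A n * B n \<le> R * ((t * (A n)\<^sup>2 + (B n)\<^sup>2 / t) / 2)"
      using bnd[of n] by (simp only: real_norm_def abs_le_iff)
  qed
  also have "\<dots> = R * ((t * (\<Sum>n. (A n)\<^sup>2) + (\<Sum>n. (B n)\<^sup>2) / t) / 2)"
    by (simp only: suminf_mult[OF sAB2] suminf_divide[OF sAB] suminf_add[OF sA' sB', symmetric]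
       suminf_mult[OF sA] suminf_divide[OF sB])
  also have "\<dots> \<le> R * ((t * VU + VV / t) / 2)"
    using R0 t sAU sBV by (intro mult_left_mono divide_right_mono add_mono) (auto intro: divide_right_mono)
  also have "t * VU + VV / t = 2 * sqrt (VU * VV)"
  proof -
    have "(t * VU)\<^sup>2 = VU * VV" using tt pu by (simp add: power2_eq_square field_simps)
    hence "t * VU = sqrt (VU * VV)" using t pu by (intro real_sqrt_unique[symmetric]) auto
    moreover have "(VV / t)\<^sup>2 = VU * VV" using tt pv t pu
      by (simp add: power2_eq_square divide_simps) (simp add: algebra_simps)
    hence "VV / t = sqrt (VU * VV)" using t pv by (intro real_sqrt_unique[symmetric]) auto
    ultimately show ?thesis by simp
  qed
  finally show "(\<Sum>n. r n * A n * B n) \<le> R * sqrt (VU * VV)" by simp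
qed


lemma orth_const_one:
  assumes fd: "bounded_support_density g a b" and P: "orthonormal_poly_system g P"
  shows "poly (P 0) x = 1"
proof -
  have H: "degree (P 0) = 0 \<and> lead_coeff (P 0) > 0" using P unfolding orthonormal_poly_system_def by blast
  hence deg: "degree (P 0) = 0" and lc: "lead_coeff (P 0) > 0" by auto
  define k where "k = coeff (P 0) 0"
  have P0: "P 0 = [:k:]" using degree_0_id[OF deg] by (simp add: k_def)
  have k: "k > 0" using lc deg by (simp add: k_def)
  have "(\<integral>x. poly (P 0) x * poly (P 0) x * g x \<partial>lborel) = 1" using P unfolding orthonormal_poly_system_def by auto
  hence "k * k * (\<integral>x. g x \<partial>lborel) = 1" by (simp add: P0)
  hence "k * k = 1" using fd unfolding bounded_support_density_def by simp
  hence "(k - 1) * (k + 1) = 0" by (simp add: algebra_simps)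
  hence "k = 1" using k by simp
  thus ?thesis by (simp add: P0)
qed

lemma orth_mean_zero:
  assumes fd: "bounded_support_density g a b" and P: "orthonormal_poly_system g P" and n: "n \<noteq> 0"
  shows "(\<integral>x. g x * poly (P n) x \<partial>lborel) = 0" "integrable lborel (\<lambda>x. g x * poly (P n) x)"
proof -
  have "(\<integral>x. poly (P n) x * poly (P 0) x * g x \<partial>lborel) = 0"
       "integrable lborel (\<lambda>x. poly (P n) x * poly (P 0) x * g x)"
    using P n unfolding orthonormal_poly_system_def by auto
  thus "(\<integral>x. g x * poly (P n) x \<partial>lborel) = 0" "integrable lborel (\<lambda>x. g x * poly (P n) x)"
    using orth_const_one[OF fd P] by (simp_all add: mult.commute)
qed

lemma orth_sup_ge1:
  assumes fd: "bounded_support_density g a b" and P: "orthonormal_poly_system g P"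
  shows "sup_abs_on (P n) a b \<ge> 1"
proof -
  let ?c = "sup_abs_on (P n) a b"
  have g: "\<And>x. 0 \<le> g x" "integrable lborel g" "(\<integral>x. g x \<partial>lborel) = 1" "\<And>x. x \<notin> {a..b} \<Longrightarrow> g x = 0"
    using fd unfolding bounded_support_density_def by auto
  have I: "integrable lborel (\<lambda>x. poly (P n) x * poly (P n) x * g x)"
     "(\<integral>x. poly (P n) x * poly (P n) x * g x \<partial>lborel) = 1"
    using P unfolding orthonormal_poly_system_def by auto
  have "1 = (\<integral>x. poly (P n) x * poly (P n) x * g x \<partial>lborel)" using I by simp
  also have "\<dots> \<le> (\<integral>x. ?c\<^sup>2 * g x \<partial>lborel)"
  proof (rule integral_mono[OF I(1)])
    show "integrable lborel (\<lambda>x. ?c\<^sup>2 * g x)" using g by simp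
    fix x
    show "poly (P n) x * poly (P n) x * g x \<le> ?c\<^sup>2 * g x"
    proof (cases "x \<in> {a..b}")
      case True
      have "\<bar>poly (P n) x\<bar> \<le> ?c" by (rule sup_abs_on_bound[OF True])
      hence "\<bar>poly (P n) x\<bar> * \<bar>poly (P n) x\<bar> \<le> ?c * ?c"
        by (intro mult_mono) auto
      hence "poly (P n) x * poly (P n) x \<le> ?c\<^sup>2" by (simp add: power2_eq_square)
      thus ?thesis using g(1)[of x] by (intro mult_right_mono) auto
    qed (use g in auto)
  qed
  also have "\<dots> = ?c\<^sup>2" using g by simp
  finally have "1 \<le> ?c\<^sup>2" .
  moreover have "a \<in> {a..b}" using fd unfolding bounded_support_density_def by simp
  hence "?c \<ge> 0" using sup_abs_on_bound[of a a b "P n"] by linarith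
  ultimately show ?thesis
  proof (rule_tac ccontr)
    assume "1 \<le> ?c\<^sup>2" "?c \<ge> 0" "\<not> 1 \<le> ?c"
    hence "?c ^ 2 < 1 ^ 2" by (intro power_strict_mono) auto
    thus False using \<open>1 \<le> ?c\<^sup>2\<close> by simp
  qed
qed


locale lanc =
  fixes f1 f2 :: "real \<Rightarrow> real" and a1 b1 a2 b2 :: real
    and phi psi :: "nat \<Rightarrow> real poly" and rho :: "nat \<Rightarrow> real"
    and M :: "'a measure" and X Y :: "'a \<Rightarrow> real"
  assumes f1: "bounded_support_density f1 a1 b1"
    and f2: "bounded_support_density f2 a2 b2"
    and phi: "orthonormal_poly_system f1 phi"
    and psi: "orthonormal_poly_system f2 psi"
    and summ: "summable (\<lambda>n. \<bar>rho (Suc n)\<bar> * sup_abs_on (phi (Suc n)) a1 b1 * sup_abs_on (psi (Suc n)) a2 b2)"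
    and sum_le: "(\<Sum>n. \<bar>rho (Suc n)\<bar> * sup_abs_on (phi (Suc n)) a1 b1 * sup_abs_on (psi (Suc n)) a2 b2) \<le> 1"
    and M: "prob_space M"
    and XY: "distributed M (lborel \<Otimes>\<^sub>M lborel) (\<lambda>\<omega>. (X \<omega>, Y \<omega>))
               (\<lambda>(x, y). ennreal (lancaster_density f1 f2 a1 b1 a2 b2 phi psi rho x y))"
begin

abbreviation "F \<equiv> lancaster_density f1 f2 a1 b1 a2 b2 phi psi rho"
definition "t n x y = rho (Suc n) * poly (phi (Suc n)) x * poly (psi (Suc n)) y"
definition "S x y = (\<Sum>n. t n x y)"
definition "bd n = \<bar>rho (Suc n)\<bar> * sup_abs_on (phi (Suc n)) a1 b1 * sup_abs_on (psi (Suc n)) a2 b2"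

lemma f1_facts: "\<And>x. 0 \<le> f1 x" "integrable lborel f1" "(\<integral>x. f1 x \<partial>lborel) = 1"
  "\<And>x. x \<notin> {a1..b1} \<Longrightarrow> f1 x = 0" "f1 \<in> borel_measurable lborel" "a1 < b1"
  using f1 unfolding bounded_support_density_def by auto
lemma f2_facts: "\<And>x. 0 \<le> f2 x" "integrable lborel f2" "(\<integral>x. f2 x \<partial>lborel) = 1"
  "\<And>x. x \<notin> {a2..b2} \<Longrightarrow> f2 x = 0" "f2 \<in> borel_measurable lborel" "a2 < b2"
  using f2 unfolding bounded_support_density_def by auto

lemma f1_meas[measurable]: "f1 \<in> borel_measurable lborel" by (rule f1_facts)
lemma f2_meas[measurable]: "f2 \<in> borel_measurable lborel" by (rule f2_facts)

lemma t_meas[measurable]: "(\<lambda>(x,y). t n x y) \<in> borel_measurable (lborel \<Otimes>\<^sub>M lborel)"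
  unfolding t_def by measurable
lemma S_meas[measurable]: "(\<lambda>(x,y). S x y) \<in> borel_measurable (lborel \<Otimes>\<^sub>M lborel)"
  unfolding S_def by measurable

lemma bd_nonneg: "bd n \<ge> 0"
proof -
  have "sup_abs_on (phi (Suc n)) a1 b1 \<ge> 1" "sup_abs_on (psi (Suc n)) a2 b2 \<ge> 1"
    using orth_sup_ge1[OF f1 phi] orth_sup_ge1[OF f2 psi] by auto
  thus ?thesis unfolding bd_def by simp
qed

lemma t_bound: assumes "x \<in> {a1..b1}" "y \<in> {a2..b2}" shows "\<bar>t n x y\<bar> \<le> bd n"
proof -
  have "\<bar>t n x y\<bar> = \<bar>rho (Suc n)\<bar> * \<bar>poly (phi (Suc n)) x\<bar> * \<bar>poly (psi (Suc n)) y\<bar>"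
    unfolding t_def by (simp add: abs_mult)
  also have "\<dots> \<le> bd n" unfolding bd_def
    using sup_abs_on_bound[OF assms(1), of "phi (Suc n)"] sup_abs_on_bound[OF assms(2), of "psi (Suc n)"]
    by (intro mult_mono) auto
  finally show ?thesis .
qed

lemma bd_summ: "summable bd" using summ unfolding bd_def .

lemma partial_bound: "(\<Sum>k<n. bd k) \<le> 1"
  using sum_le_suminf[OF bd_summ, of "{..<n}"] bd_nonneg sum_le unfolding bd_def by fastforce

lemma t_sums: assumes "x \<in> {a1..b1}" "y \<in> {a2..b2}" shows "(\<lambda>n. t n x y) sums S x y"
proof -
  have "summable (\<lambda>n. t n x y)"
    by (rule summable_comparison_test'[OF bd_summ]) (use t_bound[OF assms] in auto)
  thus ?thesis unfolding S_def by (rule summable_sums)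
qed

lemma t_partial: assumes "x \<in> {a1..b1}" "y \<in> {a2..b2}" shows "\<bar>\<Sum>k<n. t k x y\<bar> \<le> 1"
proof -
  have "\<bar>\<Sum>k<n. t k x y\<bar> \<le> (\<Sum>k<n. \<bar>t k x y\<bar>)" by (rule sum_abs)
  also have "\<dots> \<le> (\<Sum>k<n. bd k)" by (intro sum_mono t_bound assms)
  also have "\<dots> \<le> 1" by (rule partial_bound)
  finally show ?thesis .
qed

lemma S_bound: assumes "x \<in> {a1..b1}" "y \<in> {a2..b2}" shows "\<bar>S x y\<bar> \<le> 1"
proof -
  have "(\<lambda>n. \<bar>\<Sum>k<n. t k x y\<bar>) \<longlonglongrightarrow> \<bar>S x y\<bar>"
    using t_sums[OF assms] unfolding sums_def by (intro tendsto_rabs)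
  thus ?thesis by (rule LIMSEQ_le_const2) (use t_partial[OF assms] in auto)
qed

lemma F_eq: "F x y = f1 x * f2 y * (1 + S x y)"
  unfolding lancaster_density_def S_def t_def using f1_facts(4) f2_facts(4) by auto

lemma F_nonneg: "F x y \<ge> 0"
proof (cases "x \<in> {a1..b1} \<and> y \<in> {a2..b2}")
  case True
  thus ?thesis unfolding F_eq using S_bound[of x y] f1_facts(1)[of x] f2_facts(1)[of y]
    by (intro mult_nonneg_nonneg) auto
next
  case False
  hence "f1 x * f2 y = 0" using f1_facts(4)[of x] f2_facts(4)[of y] by auto
  thus ?thesis unfolding F_eq by (simp only: mult_zero_left order_refl)
qed

lemma F_meas[measurable]: "(\<lambda>(x,y). F x y) \<in> borel_measurable (lborel \<Otimes>\<^sub>M lborel)"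
  unfolding F_eq by measurable

end

context lanc begin

lemma marg1: "(\<integral>\<^sup>+z. ennreal (F x z) \<partial>lborel) = ennreal (f1 x)"
proof (cases "x \<in> {a1..b1}")
  case False
  hence "\<And>z. F x z = 0" "f1 x = 0" unfolding lancaster_density_def using f1_facts(4) by auto
  thus ?thesis by simp
next
  case True
  have mS[measurable]: "(\<lambda>z. S x z) \<in> borel_measurable lborel" unfolding S_def t_def by measurable
  have mt[measurable]: "(\<lambda>z. t n x z) \<in> borel_measurable lborel" for n unfolding t_def by measurable
  have conv: "(\<lambda>n. t n x z) sums S x z" if "f2 z \<noteq> 0" for z
    using t_sums[OF True] that f2_facts(4)[of z] by blast
  have bnd: "\<bar>\<Sum>k<n. t k x z\<bar> \<le> 1" if "f2 z \<noteq> 0" for z n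
    using t_partial[OF True] that f2_facts(4)[of z] by blast
  note DC = dc_series[OF f2_facts(2) mS mt conv bnd]
  have z: "(\<integral>z. f2 z * t n x z \<partial>lborel) = 0" for n
  proof -
    have "(\<lambda>z. f2 z * t n x z) = (\<lambda>z. (rho (Suc n) * poly (phi (Suc n)) x) * (f2 z * poly (psi (Suc n)) z))"
      unfolding t_def by (auto simp: mult_ac)
    thus ?thesis using orth_mean_zero(1)[OF f2 psi, of "Suc n"] by simp
  qed
  have "(\<integral>z. f2 z * S x z \<partial>lborel) = 0"
    using DC(2) unfolding z by (metis sums_unique sums_zero suminf_zero)
  have eq: "(\<lambda>z. F x z) = (\<lambda>z. f1 x * (f2 z + f2 z * S x z))"
    unfolding F_eq by (auto simp: algebra_simps)
  have int: "integrable lborel (\<lambda>z. F x z)" unfolding eq using DC(1) f2_facts(2) by auto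
  have "(\<integral>z. F x z \<partial>lborel) = f1 x" unfolding eq using DC(1) f2_facts(2,3) \<open>(\<integral>z. f2 z * S x z \<partial>lborel) = 0\<close>
    by simp
  moreover have "(\<integral>\<^sup>+z. ennreal (F x z) \<partial>lborel) = ennreal (\<integral>z. F x z \<partial>lborel)"
    by (rule nn_integral_eq_integral[OF int]) (simp add: F_nonneg)
  ultimately show ?thesis by simp
qed

lemma marg2: "(\<integral>\<^sup>+x. ennreal (F x y) \<partial>lborel) = ennreal (f2 y)"
proof (cases "y \<in> {a2..b2}")
  case False
  hence "\<And>x. F x y = 0" "f2 y = 0" unfolding lancaster_density_def using f2_facts(4) by auto
  thus ?thesis by simp
next
  case True
  have mS[measurable]: "(\<lambda>x. S x y) \<in> borel_measurable lborel" unfolding S_def t_def by measurable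
  have mt[measurable]: "(\<lambda>x. t n x y) \<in> borel_measurable lborel" for n unfolding t_def by measurable
  have conv: "(\<lambda>n. t n x y) sums S x y" if "f1 x \<noteq> 0" for x
    using t_sums[OF _ True] that f1_facts(4)[of x] by blast
  have bnd: "\<bar>\<Sum>k<n. t k x y\<bar> \<le> 1" if "f1 x \<noteq> 0" for x n
    using t_partial[OF _ True] that f1_facts(4)[of x] by blast
  note DC = dc_series[OF f1_facts(2) mS mt conv bnd]
  have z: "(\<integral>x. f1 x * t n x y \<partial>lborel) = 0" for n
  proof -
    have "(\<lambda>x. f1 x * t n x y) = (\<lambda>x. (rho (Suc n) * poly (psi (Suc n)) y) * (f1 x * poly (phi (Suc n)) x))"
      unfolding t_def by (auto simp: mult_ac)
    thus ?thesis using orth_mean_zero(1)[OF f1 phi, of "Suc n"] by simp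
  qed
  have "(\<integral>x. f1 x * S x y \<partial>lborel) = 0"
    using DC(2) unfolding z by (metis sums_unique sums_zero suminf_zero)
  have eq: "(\<lambda>x. F x y) = (\<lambda>x. f2 y * (f1 x + f1 x * S x y))"
    unfolding F_eq by (auto simp: algebra_simps)
  have int: "integrable lborel (\<lambda>x. F x y)" unfolding eq using DC(1) f1_facts(2) by auto
  have "(\<integral>x. F x y \<partial>lborel) = f2 y" unfolding eq using DC(1) f1_facts(2,3) \<open>(\<integral>x. f1 x * S x y \<partial>lborel) = 0\<close>
    by simp
  moreover have "(\<integral>\<^sup>+x. ennreal (F x y) \<partial>lborel) = ennreal (\<integral>x. F x y \<partial>lborel)"
    by (rule nn_integral_eq_integral[OF int]) (simp add: F_nonneg)
  ultimately show ?thesis by simp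
qed

lemma DX: "distributed M lborel X (\<lambda>x. ennreal (f1 x))"
proof -
  have "distributed M lborel X (\<lambda>x. \<integral>\<^sup>+z. (\<lambda>(x,y). ennreal (F x y)) (x, z) \<partial>lborel)"
    by (rule prob_space.distr_marginal1[OF M _ _ XY]) (simp_all add: lborel.sigma_finite_measure_axioms)
  thus ?thesis by (simp add: marg1)
qed

lemma DY: "distributed M lborel Y (\<lambda>y. ennreal (f2 y))"
proof -
  have "distributed M lborel Y (\<lambda>y. \<integral>\<^sup>+x. (\<lambda>(x,y). ennreal (F x y)) (x, y) \<partial>lborel)"
    by (rule prob_space.distr_marginal2[OF M _ _ XY]) (simp_all add: lborel.sigma_finite_measure_axioms)
  thus ?thesis by (simp add: marg2)
qed

end

lemma sq_int_to_int:
  fixes f g :: "real \<Rightarrow> real"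
  assumes fi: "integrable lborel f" and f0: "\<And>x. f x \<ge> 0" and g[measurable]: "g \<in> borel_measurable borel"
    and fg: "integrable lborel (\<lambda>x. f x * (g x)\<^sup>2)"
  shows "integrable lborel (\<lambda>x. f x * g x)"
proof (rule Bochner_Integration.integrable_bound[OF Bochner_Integration.integrable_add[OF fg fi]])
  have [measurable]: "f \<in> borel_measurable borel" using fi by auto
  show "(\<lambda>x. f x * g x) \<in> borel_measurable lborel" by simp
  show "AE x in lborel. norm (f x * g x) \<le> norm (f x * (g x)\<^sup>2 + f x)"
  proof (rule AE_I2)
    fix x
    have "\<bar>g x\<bar> \<le> (g x)\<^sup>2 + 1"
    proof (cases "\<bar>g x\<bar> \<le> 1")
      case True thus ?thesis by (smt (verit) zero_le_power2)
    next
      case False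
      hence "1 * \<bar>g x\<bar> \<le> \<bar>g x\<bar> * \<bar>g x\<bar>" by (intro mult_right_mono) auto
      thus ?thesis by (simp add: power2_eq_square abs_mult_self_eq)
    qed
    hence "f x * \<bar>g x\<bar> \<le> f x * ((g x)\<^sup>2 + 1)" using f0[of x] by (rule mult_left_mono)
    thus "norm (f x * g x) \<le> norm (f x * (g x)\<^sup>2 + f x)"
      using f0[of x] by (simp add: abs_mult algebra_simps)
  qed
qed

context lanc begin

lemma int_poly1:
  assumes [measurable]: "g \<in> borel_measurable borel" and I: "integrable lborel (\<lambda>x. f1 x * g x)"
  shows "integrable lborel (\<lambda>x. f1 x * g x * poly p x)"
proof (rule Bochner_Integration.integrable_bound[of _ "\<lambda>x. sup_abs_on p a1 b1 * (f1 x * g x)"])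
  show "integrable lborel (\<lambda>x. sup_abs_on p a1 b1 * (f1 x * g x))" using I by simp
  show "(\<lambda>x. f1 x * g x * poly p x) \<in> borel_measurable lborel" by simp
  show "AE x in lborel. norm (f1 x * g x * poly p x) \<le> norm (sup_abs_on p a1 b1 * (f1 x * g x))"
  proof (rule AE_I2)
    fix x
    show "norm (f1 x * g x * poly p x) \<le> norm (sup_abs_on p a1 b1 * (f1 x * g x))"
    proof (cases "x \<in> {a1..b1}")
      case True
      have "\<bar>poly p x\<bar> \<le> sup_abs_on p a1 b1" by (rule sup_abs_on_bound[OF True])
      hence "\<bar>f1 x * g x\<bar> * \<bar>poly p x\<bar> \<le> \<bar>f1 x * g x\<bar> * sup_abs_on p a1 b1" by (intro mult_left_mono) auto
      also have "\<dots> \<le> \<bar>f1 x * g x\<bar> * \<bar>sup_abs_on p a1 b1\<bar>" by (rule mult_left_mono[OF abs_ge_self abs_ge_zero])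
      also have "\<dots> = norm (sup_abs_on p a1 b1 * (f1 x * g x))" by (simp add: abs_mult)
      finally show ?thesis by (simp add: abs_mult)
    qed (use f1_facts(4) in simp)
  qed
qed

lemma int_poly2:
  assumes [measurable]: "g \<in> borel_measurable borel" and I: "integrable lborel (\<lambda>x. f2 x * g x)"
  shows "integrable lborel (\<lambda>x. f2 x * g x * poly p x)"
proof (rule Bochner_Integration.integrable_bound[of _ "\<lambda>x. sup_abs_on p a2 b2 * (f2 x * g x)"])
  show "integrable lborel (\<lambda>x. sup_abs_on p a2 b2 * (f2 x * g x))" using I by simp
  show "(\<lambda>x. f2 x * g x * poly p x) \<in> borel_measurable lborel" by simp
  show "AE x in lborel. norm (f2 x * g x * poly p x) \<le> norm (sup_abs_on p a2 b2 * (f2 x * g x))"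
  proof (rule AE_I2)
    fix x
    show "norm (f2 x * g x * poly p x) \<le> norm (sup_abs_on p a2 b2 * (f2 x * g x))"
    proof (cases "x \<in> {a2..b2}")
      case True
      have "\<bar>poly p x\<bar> \<le> sup_abs_on p a2 b2" by (rule sup_abs_on_bound[OF True])
      hence "\<bar>f2 x * g x\<bar> * \<bar>poly p x\<bar> \<le> \<bar>f2 x * g x\<bar> * sup_abs_on p a2 b2" by (intro mult_left_mono) auto
      also have "\<dots> \<le> \<bar>f2 x * g x\<bar> * \<bar>sup_abs_on p a2 b2\<bar>" by (rule mult_left_mono[OF abs_ge_self abs_ge_zero])
      also have "\<dots> = norm (sup_abs_on p a2 b2 * (f2 x * g x))" by (simp add: abs_mult)
      finally show ?thesis by (simp add: abs_mult)
    qed (use f2_facts(4) in simp)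
  qed
qed

lemma XY': "distributed M (lborel \<Otimes>\<^sub>M lborel) (\<lambda>\<omega>. (X \<omega>, Y \<omega>)) (\<lambda>z. ennreal (case_prod F z))"
proof -
  have "(\<lambda>(x, y). ennreal (F x y)) = (\<lambda>z. ennreal (case_prod F z))" by auto
  thus ?thesis using XY by simp
qed

lemma joint:
  assumes [measurable]: "g1 \<in> borel_measurable borel" "g2 \<in> borel_measurable borel"
    and I1: "integrable lborel (\<lambda>x. f1 x * g1 x)" and I2: "integrable lborel (\<lambda>x. f2 x * g2 x)"
  shows "(\<lambda>n. rho (Suc n) * (\<integral>x. f1 x * g1 x * poly (phi (Suc n)) x \<partial>lborel) *
                (\<integral>y. f2 y * g2 y * poly (psi (Suc n)) y \<partial>lborel))
         sums ((\<integral>\<omega>. g1 (X \<omega>) * g2 (Y \<omega>) \<partial>M) - (\<integral>x. f1 x * g1 x \<partial>lborel) * (\<integral>y. f2 y * g2 y \<partial>lborel))"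
proof -
  let ?P = "lborel \<Otimes>\<^sub>M lborel"
  define w where "w = (\<lambda>(x,y). (f1 x * g1 x) * (f2 y * g2 y))"
  have wI: "integrable ?P w" unfolding w_def by (rule prod_integrable(1)[OF I1 I2])
  have wE: "integral\<^sup>L ?P w = (\<integral>x. f1 x * g1 x \<partial>lborel) * (\<integral>y. f2 y * g2 y \<partial>lborel)"
    unfolding w_def by (rule prod_integrable(2)[OF I1 I2])
  have conv: "(\<lambda>n. (\<lambda>(x,y). t n x y) z) sums (\<lambda>(x,y). S x y) z" if "w z \<noteq> 0" for z
  proof -
    obtain x y where z: "z = (x,y)" by (cases z)
    have "f1 x \<noteq> 0" "f2 y \<noteq> 0" using that unfolding z w_def by auto
    hence "x \<in> {a1..b1}" "y \<in> {a2..b2}" using f1_facts(4) f2_facts(4) by blast+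
    thus ?thesis unfolding z using t_sums by simp
  qed
  have bnd: "\<bar>\<Sum>k<n. (\<lambda>(x,y). t k x y) z\<bar> \<le> 1" if "w z \<noteq> 0" for z n
  proof -
    obtain x y where z: "z = (x,y)" by (cases z)
    have "f1 x \<noteq> 0" "f2 y \<noteq> 0" using that unfolding z w_def by auto
    hence "x \<in> {a1..b1}" "y \<in> {a2..b2}" using f1_facts(4) f2_facts(4) by blast+
    thus ?thesis unfolding z using t_partial by simp
  qed
  note DC = dc_series[OF wI S_meas t_meas conv bnd]
  have tn: "(\<integral>z. w z * (\<lambda>(x,y). t n x y) z \<partial>?P) = rho (Suc n) * (\<integral>x. f1 x * g1 x * poly (phi (Suc n)) x \<partial>lborel) *
                (\<integral>y. f2 y * g2 y * poly (psi (Suc n)) y \<partial>lborel)" for n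
  proof -
    have "(\<lambda>z. w z * (\<lambda>(x,y). t n x y) z) = (\<lambda>z. rho (Suc n) * (case z of (x,y) \<Rightarrow> (f1 x * g1 x * poly (phi (Suc n)) x) * (f2 y * g2 y * poly (psi (Suc n)) y)))"
      unfolding w_def t_def by (auto simp: mult_ac)
    thus ?thesis using prod_integrable(2)[OF int_poly1[OF _ I1] int_poly2[OF _ I2]] by simp
  qed
  have E: "(\<integral>\<omega>. g1 (X \<omega>) * g2 (Y \<omega>) \<partial>M) = (\<integral>z. case_prod F z * (case z of (x,y) \<Rightarrow> g1 x * g2 y) \<partial>?P)"
    using distributed_integral[OF XY', of "\<lambda>(x,y). g1 x * g2 y"] by (simp add: F_nonneg split_beta')
  have "(\<lambda>z. case_prod F z * (case z of (x,y) \<Rightarrow> g1 x * g2 y)) = (\<lambda>z. w z + w z * (\<lambda>(x,y). S x y) z)"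
    unfolding w_def F_eq by (auto simp: algebra_simps)
  hence "(\<integral>\<omega>. g1 (X \<omega>) * g2 (Y \<omega>) \<partial>M) = integral\<^sup>L ?P w + (\<integral>z. w z * (\<lambda>(x,y). S x y) z \<partial>?P)"
    unfolding E using wI DC(1) by simp
  thus ?thesis using DC(2) unfolding tn wE by simp
qed

end

lemma int_poly_gen:
  assumes fd: "bounded_support_density f a b" and [measurable]: "g \<in> borel_measurable borel"
    and I: "integrable lborel (\<lambda>x. f x * g x)"
  shows "integrable lborel (\<lambda>x. f x * g x * poly p x)"
proof (rule Bochner_Integration.integrable_bound[of _ "\<lambda>x. sup_abs_on p a b * (f x * g x)"])
  have [measurable]: "f \<in> borel_measurable borel" using fd unfolding bounded_support_density_def by simp
  show "integrable lborel (\<lambda>x. sup_abs_on p a b * (f x * g x))" using I by simp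
  show "(\<lambda>x. f x * g x * poly p x) \<in> borel_measurable lborel" by simp
  show "AE x in lborel. norm (f x * g x * poly p x) \<le> norm (sup_abs_on p a b * (f x * g x))"
  proof (rule AE_I2)
    fix x
    show "norm (f x * g x * poly p x) \<le> norm (sup_abs_on p a b * (f x * g x))"
    proof (cases "x \<in> {a..b}")
      case True
      have "\<bar>poly p x\<bar> \<le> sup_abs_on p a b" by (rule sup_abs_on_bound[OF True])
      hence "\<bar>f x * g x\<bar> * \<bar>poly p x\<bar> \<le> \<bar>f x * g x\<bar> * sup_abs_on p a b" by (intro mult_left_mono) auto
      also have "\<dots> \<le> \<bar>f x * g x\<bar> * \<bar>sup_abs_on p a b\<bar>" by (rule mult_left_mono[OF abs_ge_self abs_ge_zero])
      also have "\<dots> = norm (sup_abs_on p a b * (f x * g x))" by (simp add: abs_mult)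
      finally show ?thesis by (simp add: abs_mult)
    qed (use fd in \<open>simp add: bounded_support_density_def\<close>)
  qed
qed

lemma bessel:
  assumes fd: "bounded_support_density f a b" and P: "orthonormal_poly_system f P"
    and [measurable]: "g \<in> borel_measurable borel" and I2: "integrable lborel (\<lambda>x. f x * (g x)\<^sup>2)"
    and fin: "finite J"
  shows "(\<Sum>n\<in>J. (\<integral>x. f x * g x * poly (P n) x \<partial>lborel)\<^sup>2) \<le> (\<integral>x. f x * (g x)\<^sup>2 \<partial>lborel)"
proof -
  have fm[measurable]: "f \<in> borel_measurable borel" and f0: "\<And>x. f x \<ge> 0" and fi: "integrable lborel f"
    using fd unfolding bounded_support_density_def by auto
  have I1: "integrable lborel (\<lambda>x. f x * g x)" by (rule sq_int_to_int[OF fi f0 _ I2]) simp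
  define a where "a n = (\<integral>x. f x * g x * poly (P n) x \<partial>lborel)" for n
  define h where "h x = (\<Sum>n\<in>J. a n * poly (P n) x)" for x
  have IP: "integrable lborel (\<lambda>x. f x * g x * poly (P n) x)" for n by (rule int_poly_gen[OF fd _ I1]) simp
  have IPP: "integrable lborel (\<lambda>x. poly (P m) x * poly (P n) x * f x)"
    "(\<integral>x. poly (P m) x * poly (P n) x * f x \<partial>lborel) = (if m = n then 1 else 0)" for m n
    using P unfolding orthonormal_poly_system_def by auto
  have pt: "f x * (g x - h x)\<^sup>2 = f x * (g x)\<^sup>2 - 2 * (\<Sum>n\<in>J. a n * (f x * g x * poly (P n) x))
      + (\<Sum>m\<in>J. \<Sum>n\<in>J. a m * a n * (poly (P m) x * poly (P n) x * f x))" for x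
  proof -
    have "(h x)\<^sup>2 = (\<Sum>m\<in>J. \<Sum>n\<in>J. a m * poly (P m) x * (a n * poly (P n) x))"
      unfolding h_def power2_eq_square sum_product by simp
    moreover have "g x * h x = (\<Sum>n\<in>J. a n * (g x * poly (P n) x))"
      unfolding h_def sum_distrib_left by (simp add: mult_ac)
    ultimately have A: "f x * (g x * h x) = (\<Sum>n\<in>J. a n * (f x * g x * poly (P n) x))"
      and B: "f x * (h x)\<^sup>2 = (\<Sum>m\<in>J. \<Sum>n\<in>J. a m * a n * (poly (P m) x * poly (P n) x * f x))"
      by (simp_all add: sum_distrib_left mult_ac)
    have "f x * (g x - h x)\<^sup>2 = f x * (g x)\<^sup>2 - 2 * (f x * (g x * h x)) + f x * (h x)\<^sup>2"
      by (simp add: power2_diff algebra_simps)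
    thus ?thesis unfolding A B .
  qed
  have "0 \<le> (\<integral>x. f x * (g x - h x)\<^sup>2 \<partial>lborel)" by (rule Bochner_Integration.integral_nonneg) (simp add: f0)
  also have "\<dots> = (\<integral>x. f x * (g x)\<^sup>2 \<partial>lborel) - 2 * (\<Sum>n\<in>J. a n * a n)
      + (\<Sum>m\<in>J. \<Sum>n\<in>J. a m * a n * (if m = n then 1 else 0))"
    unfolding pt using I2 IP IPP
    by (simp add: Bochner_Integration.integral_sum Bochner_Integration.integrable_sum
        Bochner_Integration.integral_add Bochner_Integration.integral_diff a_def)
  also have "(\<Sum>m\<in>J. \<Sum>n\<in>J. a m * a n * (if m = n then 1 else 0)) = (\<Sum>n\<in>J. a n * a n)"
    using fin by (simp add: if_distrib cong: if_cong)
  finally show ?thesis unfolding a_def by (simp add: power2_eq_square)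
qed


context lanc begin

lemma EX:
  assumes [measurable]: "g \<in> borel_measurable borel"
  shows "integrable lborel (\<lambda>x. f1 x * g x) \<longleftrightarrow> integrable M (\<lambda>\<omega>. g (X \<omega>))"
    "(\<integral>x. f1 x * g x \<partial>lborel) = (\<integral>\<omega>. g (X \<omega>) \<partial>M)"
  using distributed_integrable[OF DX, of g] distributed_integral[OF DX, of g] f1_facts(1) by simp_all

lemma EY:
  assumes [measurable]: "g \<in> borel_measurable borel"
  shows "integrable lborel (\<lambda>x. f2 x * g x) \<longleftrightarrow> integrable M (\<lambda>\<omega>. g (Y \<omega>))"
    "(\<integral>x. f2 x * g x \<partial>lborel) = (\<integral>\<omega>. g (Y \<omega>) \<partial>M)"
  using distributed_integrable[OF DY, of g] distributed_integral[OF DY, of g] f2_facts(1) by simp_all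

lemma L2X:
  assumes [measurable]: "g \<in> borel_measurable borel" and I: "integrable M (\<lambda>\<omega>. (g (X \<omega>))\<^sup>2)"
  shows "integrable lborel (\<lambda>x. f1 x * (g x)\<^sup>2)" "integrable lborel (\<lambda>x. f1 x * g x)"
    "integrable M (\<lambda>\<omega>. g (X \<omega>))"
    "var M (\<lambda>\<omega>. g (X \<omega>)) = (\<integral>x. f1 x * (g x)\<^sup>2 \<partial>lborel) - (\<integral>x. f1 x * g x \<partial>lborel)\<^sup>2"
proof -
  show 1: "integrable lborel (\<lambda>x. f1 x * (g x)\<^sup>2)" using EX(1)[of "\<lambda>x. (g x)\<^sup>2"] I by simp
  show 2: "integrable lborel (\<lambda>x. f1 x * g x)" by (rule sq_int_to_int[OF f1_facts(2) f1_facts(1) _ 1]) simp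
  show 3: "integrable M (\<lambda>\<omega>. g (X \<omega>))" using EX(1)[of g] 2 by simp
  show "var M (\<lambda>\<omega>. g (X \<omega>)) = (\<integral>x. f1 x * (g x)\<^sup>2 \<partial>lborel) - (\<integral>x. f1 x * g x \<partial>lborel)\<^sup>2"
    using var_formula[OF M 3 I] EX(2)[of g] EX(2)[of "\<lambda>x. (g x)\<^sup>2"] by simp
qed

lemma L2Y:
  assumes [measurable]: "g \<in> borel_measurable borel" and I: "integrable M (\<lambda>\<omega>. (g (Y \<omega>))\<^sup>2)"
  shows "integrable lborel (\<lambda>x. f2 x * (g x)\<^sup>2)" "integrable lborel (\<lambda>x. f2 x * g x)"
    "integrable M (\<lambda>\<omega>. g (Y \<omega>))"
    "var M (\<lambda>\<omega>. g (Y \<omega>)) = (\<integral>x. f2 x * (g x)\<^sup>2 \<partial>lborel) - (\<integral>x. f2 x * g x \<partial>lborel)\<^sup>2"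
proof -
  show 1: "integrable lborel (\<lambda>x. f2 x * (g x)\<^sup>2)" using EY(1)[of "\<lambda>x. (g x)\<^sup>2"] I by simp
  show 2: "integrable lborel (\<lambda>x. f2 x * g x)" by (rule sq_int_to_int[OF f2_facts(2) f2_facts(1) _ 1]) simp
  show 3: "integrable M (\<lambda>\<omega>. g (Y \<omega>))" using EY(1)[of g] 2 by simp
  show "var M (\<lambda>\<omega>. g (Y \<omega>)) = (\<integral>x. f2 x * (g x)\<^sup>2 \<partial>lborel) - (\<integral>x. f2 x * g x \<partial>lborel)\<^sup>2"
    using var_formula[OF M 3 I] EY(2)[of g] EY(2)[of "\<lambda>x. (g x)\<^sup>2"] by simp
qed

lemma cov_series:
  assumes [measurable]: "g1 \<in> borel_measurable borel" "g2 \<in> borel_measurable borel"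
    and I1: "integrable M (\<lambda>\<omega>. (g1 (X \<omega>))\<^sup>2)" and I2: "integrable M (\<lambda>\<omega>. (g2 (Y \<omega>))\<^sup>2)"
  shows "(\<lambda>n. rho (Suc n) * (\<integral>x. f1 x * g1 x * poly (phi (Suc n)) x \<partial>lborel) *
                (\<integral>y. f2 y * g2 y * poly (psi (Suc n)) y \<partial>lborel))
         sums covar M (\<lambda>\<omega>. g1 (X \<omega>)) (\<lambda>\<omega>. g2 (Y \<omega>))"
proof -
  have XM[measurable]: "X \<in> borel_measurable M" using DX unfolding distributed_def by simp
  have YM[measurable]: "Y \<in> borel_measurable M" using DY unfolding distributed_def by simp
  have IUV: "integrable M (\<lambda>\<omega>. g1 (X \<omega>) * g2 (Y \<omega>))"
  proof (rule Bochner_Integration.integrable_bound[OF Bochner_Integration.integrable_add[OF I1 I2]])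
    show "(\<lambda>\<omega>. g1 (X \<omega>) * g2 (Y \<omega>)) \<in> borel_measurable M" by measurable
    show "AE \<omega> in M. norm (g1 (X \<omega>) * g2 (Y \<omega>)) \<le> norm ((g1 (X \<omega>))\<^sup>2 + (g2 (Y \<omega>))\<^sup>2)"
    proof (rule AE_I2)
      fix \<omega>
      have "0 \<le> (\<bar>g1 (X \<omega>)\<bar> - \<bar>g2 (Y \<omega>)\<bar>)\<^sup>2" by simp
      hence "2 * (\<bar>g1 (X \<omega>)\<bar> * \<bar>g2 (Y \<omega>)\<bar>) \<le> (g1 (X \<omega>))\<^sup>2 + (g2 (Y \<omega>))\<^sup>2"
        by (simp add: power2_diff)
      moreover have "0 \<le> \<bar>g1 (X \<omega>)\<bar> * \<bar>g2 (Y \<omega>)\<bar>" by simp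
      moreover have "0 \<le> (g1 (X \<omega>))\<^sup>2" "0 \<le> (g2 (Y \<omega>))\<^sup>2" by simp_all
      ultimately have "\<bar>g1 (X \<omega>)\<bar> * \<bar>g2 (Y \<omega>)\<bar> \<le> (g1 (X \<omega>))\<^sup>2 + (g2 (Y \<omega>))\<^sup>2" by linarith
      thus "norm (g1 (X \<omega>) * g2 (Y \<omega>)) \<le> norm ((g1 (X \<omega>))\<^sup>2 + (g2 (Y \<omega>))\<^sup>2)"
        by (simp add: abs_mult)
    qed
  qed
  have c: "covar M (\<lambda>\<omega>. g1 (X \<omega>)) (\<lambda>\<omega>. g2 (Y \<omega>)) = (\<integral>\<omega>. g1 (X \<omega>) * g2 (Y \<omega>) \<partial>M)
       - (\<integral>x. f1 x * g1 x \<partial>lborel) * (\<integral>y. f2 y * g2 y \<partial>lborel)"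
    using covar_formula[OF M L2X(3)[OF _ I1] L2Y(3)[OF _ I2] IUV] EX(2)[of g1] EY(2)[of g2] by simp
  show ?thesis unfolding c by (rule joint) (use L2X(2)[OF _ I1] L2Y(2)[OF _ I2] in simp_all)
qed

lemma bessel_var1:
  assumes [measurable]: "g \<in> borel_measurable borel" and I: "integrable M (\<lambda>\<omega>. (g (X \<omega>))\<^sup>2)"
  shows "(\<Sum>n<N. (\<integral>x. f1 x * g x * poly (phi (Suc n)) x \<partial>lborel)\<^sup>2) \<le> var M (\<lambda>\<omega>. g (X \<omega>))"
proof -
  have "(\<Sum>n<Suc N. (\<integral>x. f1 x * g x * poly (phi n) x \<partial>lborel)\<^sup>2) \<le> (\<integral>x. f1 x * (g x)\<^sup>2 \<partial>lborel)"
    by (rule bessel[OF f1 phi _ L2X(1)[OF _ I]]) simp_all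
  thus ?thesis unfolding L2X(4)[OF assms(1) I] sum.lessThan_Suc_shift using orth_const_one[OF f1 phi] by simp
qed

lemma bessel_var2:
  assumes [measurable]: "g \<in> borel_measurable borel" and I: "integrable M (\<lambda>\<omega>. (g (Y \<omega>))\<^sup>2)"
  shows "(\<Sum>n<N. (\<integral>x. f2 x * g x * poly (psi (Suc n)) x \<partial>lborel)\<^sup>2) \<le> var M (\<lambda>\<omega>. g (Y \<omega>))"
proof -
  have "(\<Sum>n<Suc N. (\<integral>x. f2 x * g x * poly (psi n) x \<partial>lborel)\<^sup>2) \<le> (\<integral>x. f2 x * (g x)\<^sup>2 \<partial>lborel)"
    by (rule bessel[OF f2 psi _ L2Y(1)[OF _ I]]) simp_all
  thus ?thesis unfolding L2Y(4)[OF assms(1) I] sum.lessThan_Suc_shift using orth_const_one[OF f2 psi] by simp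
qed

lemma pearson_le:
  assumes g1: "g1 \<in> L2star M X" and g2: "g2 \<in> L2star M Y" and R: "\<And>n. \<bar>rho (Suc n)\<bar> \<le> R"
  shows "pearson M (\<lambda>\<omega>. g1 (X \<omega>)) (\<lambda>\<omega>. g2 (Y \<omega>)) \<le> R"
proof -
  have [measurable]: "g1 \<in> borel_measurable borel" "g2 \<in> borel_measurable borel"
    and I1: "integrable M (\<lambda>\<omega>. (g1 (X \<omega>))\<^sup>2)" and I2: "integrable M (\<lambda>\<omega>. (g2 (Y \<omega>))\<^sup>2)"
    and v1: "var M (\<lambda>\<omega>. g1 (X \<omega>)) > 0" and v2: "var M (\<lambda>\<omega>. g2 (Y \<omega>)) > 0"
    using g1 g2 unfolding L2star_def by auto
  let ?A = "\<lambda>n. (\<integral>x. f1 x * g1 x * poly (phi (Suc n)) x \<partial>lborel)"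
  let ?B = "\<lambda>n. (\<integral>y. f2 y * g2 y * poly (psi (Suc n)) y \<partial>lborel)"
  have "covar M (\<lambda>\<omega>. g1 (X \<omega>)) (\<lambda>\<omega>. g2 (Y \<omega>)) = (\<Sum>n. rho (Suc n) * ?A n * ?B n)"
    using cov_series[OF _ _ I1 I2] by (simp add: sums_iff)
  also have "\<dots> \<le> R * sqrt (var M (\<lambda>\<omega>. g1 (X \<omega>)) * var M (\<lambda>\<omega>. g2 (Y \<omega>)))"
    by (rule series_cs(2)[OF bessel_var1[OF _ I1] bessel_var2[OF _ I2] v1 v2 R]) simp_all
  finally show ?thesis unfolding pearson_def using v1 v2 by (simp add: divide_le_eq)
qed

end

context lanc begin

lemma orth1: "integrable lborel (\<lambda>x. poly (phi m) x * poly (phi k) x * f1 x)"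
  "(\<integral>x. poly (phi m) x * poly (phi k) x * f1 x \<partial>lborel) = (if m = k then 1 else 0)"
  using phi unfolding orthonormal_poly_system_def by auto
lemma orth2: "integrable lborel (\<lambda>x. poly (psi m) x * poly (psi k) x * f2 x)"
  "(\<integral>x. poly (psi m) x * poly (psi k) x * f2 x \<partial>lborel) = (if m = k then 1 else 0)"
  using psi unfolding orthonormal_poly_system_def by auto

lemma pearson_phi:
  assumes m: "m \<ge> 1" and s: "s * s = 1"
  defines "g1 \<equiv> \<lambda>x. s * poly (phi m) x" and "g2 \<equiv> \<lambda>y. poly (psi m) y"
  shows "g1 \<in> L2star M X" "g2 \<in> L2star M Y" "pearson M (\<lambda>\<omega>. g1 (X \<omega>)) (\<lambda>\<omega>. g2 (Y \<omega>)) = s * rho m"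
proof -
  have [measurable]: "g1 \<in> borel_measurable borel" "g2 \<in> borel_measurable borel" unfolding g1_def g2_def by simp_all
  have e1: "(\<lambda>x. f1 x * (g1 x)\<^sup>2) = (\<lambda>x. poly (phi m) x * poly (phi m) x * f1 x)"
    unfolding g1_def by (auto simp: power2_eq_square algebra_simps s)
  have e2: "(\<lambda>x. f2 x * (g2 x)\<^sup>2) = (\<lambda>x. poly (psi m) x * poly (psi m) x * f2 x)"
    unfolding g2_def by (auto simp: power2_eq_square algebra_simps)
  have I1: "integrable M (\<lambda>\<omega>. (g1 (X \<omega>))\<^sup>2)" using EX(1)[of "\<lambda>x. (g1 x)\<^sup>2"] orth1(1)[of m m] e1 by simp
  have I2: "integrable M (\<lambda>\<omega>. (g2 (Y \<omega>))\<^sup>2)" using EY(1)[of "\<lambda>x. (g2 x)\<^sup>2"] orth2(1)[of m m] e2 by simp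
  have m0: "m \<noteq> 0" using m by simp
  have mean1: "(\<integral>x. f1 x * g1 x \<partial>lborel) = 0" unfolding g1_def
    using orth_mean_zero(1)[OF f1 phi m0] by (simp add: mult.left_commute)
  have mean2: "(\<integral>x. f2 x * g2 x \<partial>lborel) = 0" unfolding g2_def
    using orth_mean_zero(1)[OF f2 psi m0] by simp
  have v1: "var M (\<lambda>\<omega>. g1 (X \<omega>)) = 1" unfolding L2X(4)[OF _ I1, simplified] mean1 e1 orth1(2) by simp
  have v2: "var M (\<lambda>\<omega>. g2 (Y \<omega>)) = 1" unfolding L2Y(4)[OF _ I2, simplified] mean2 e2 orth2(2) by simp
  show "g1 \<in> L2star M X" unfolding L2star_def using I1 v1 by simp
  show "g2 \<in> L2star M Y" unfolding L2star_def using I2 v2 by simp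
  have A: "(\<integral>x. f1 x * g1 x * poly (phi (Suc n)) x \<partial>lborel) = s * (if m = Suc n then 1 else 0)" for n
  proof -
    have "(\<lambda>x. f1 x * g1 x * poly (phi (Suc n)) x) = (\<lambda>x. s * (poly (phi m) x * poly (phi (Suc n)) x * f1 x))"
      unfolding g1_def by (auto simp: mult_ac)
    thus ?thesis using orth1(2)[of m "Suc n"] by simp
  qed
  have B: "(\<integral>x. f2 x * g2 x * poly (psi (Suc n)) x \<partial>lborel) = (if m = Suc n then 1 else 0)" for n
  proof -
    have "(\<lambda>x. f2 x * g2 x * poly (psi (Suc n)) x) = (\<lambda>x. (poly (psi m) x * poly (psi (Suc n)) x * f2 x))"
      unfolding g2_def by (auto simp: mult_ac)
    thus ?thesis using orth2(2)[of m "Suc n"] by simp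
  qed
  have "(\<lambda>n. rho (Suc n) * (s * (if m = Suc n then 1 else 0)) * (if m = Suc n then 1 else 0))
      = (\<lambda>n. if n = m - 1 then s * rho m else 0)"
    using m by (auto simp: fun_eq_iff)
  hence "(\<lambda>n. if n = m - 1 then s * rho m else 0) sums covar M (\<lambda>\<omega>. g1 (X \<omega>)) (\<lambda>\<omega>. g2 (Y \<omega>))"
    using cov_series[OF _ _ I1 I2] unfolding A B by simp
  moreover have "(\<lambda>n. if n = m - 1 then s * rho m else 0) sums (s * rho m)"
    using sums_single[of "m - 1" "\<lambda>_. s * rho m"] by simp
  ultimately have "covar M (\<lambda>\<omega>. g1 (X \<omega>)) (\<lambda>\<omega>. g2 (Y \<omega>)) = s * rho m" using sums_unique2 by blast
  thus "pearson M (\<lambda>\<omega>. g1 (X \<omega>)) (\<lambda>\<omega>. g2 (Y \<omega>)) = s * rho m" unfolding pearson_def v1 v2 by simp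
qed

lemma deg1_form:
  fixes p :: "real poly"
  assumes "degree p = 1"
  shows "poly p x = coeff p 0 + coeff p 1 * x"
  unfolding poly_altdef[of p x] assms by (simp add: atMost_Suc)

lemma pearson_XY: "pearson M X Y = rho 1"
proof -
  have d1: "degree (phi 1) = 1" "coeff (phi 1) 1 > 0" using phi unfolding orthonormal_poly_system_def
    by (metis One_nat_def)+
  have e1: "degree (psi 1) = 1" "coeff (psi 1) 1 > 0" using psi unfolding orthonormal_poly_system_def
    by (metis One_nat_def)+
  define c0 c1 d0 dd1 where "c0 = coeff (phi 1) 0" "c1 = coeff (phi 1) 1" "d0 = coeff (psi 1) 0" "dd1 = coeff (psi 1) 1"
  have c1: "c1 > 0" "dd1 > 0" using d1 e1 c0_c1_d0_dd1_def by auto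
  have X: "(\<lambda>\<omega>. X \<omega>) = (\<lambda>\<omega>. (1 / c1) * poly (phi 1) (X \<omega>) + (- c0 / c1))"
    using c1 unfolding c0_c1_d0_dd1_def deg1_form[OF d1(1)] by (auto simp: field_simps)
  have Y: "(\<lambda>\<omega>. Y \<omega>) = (\<lambda>\<omega>. (1 / dd1) * poly (psi 1) (Y \<omega>) + (- d0 / dd1))"
    using c1 unfolding c0_c1_d0_dd1_def deg1_form[OF e1(1)] by (auto simp: field_simps)
  have iX: "integrable M (\<lambda>\<omega>. poly (phi 1) (X \<omega>))"
    using EX(1)[of "\<lambda>x. poly (phi 1) x"] orth_mean_zero(2)[OF f1 phi, of 1] by simp
  have iY: "integrable M (\<lambda>\<omega>. poly (psi 1) (Y \<omega>))"
    using EY(1)[of "\<lambda>x. poly (psi 1) x"] orth_mean_zero(2)[OF f2 psi, of 1] by simp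
  have "pearson M X Y = pearson M (\<lambda>\<omega>. (1 / c1) * poly (phi 1) (X \<omega>) + (- c0 / c1))
      (\<lambda>\<omega>. (1 / dd1) * poly (psi 1) (Y \<omega>) + (- d0 / dd1))"
    using X Y by (metis (no_types, lifting))
  also have "\<dots> = pearson M (\<lambda>\<omega>. poly (phi 1) (X \<omega>)) (\<lambda>\<omega>. poly (psi 1) (Y \<omega>))"
    by (rule pearson_affine[OF M iX iY]) (use c1 in simp_all)
  also have "\<dots> = 1 * rho 1" using pearson_phi(3)[of 1 1] by simp
  finally show ?thesis by simp
qed

end

context lanc begin

lemma rho_le1: assumes "n \<ge> 1" shows "\<bar>rho n\<bar> \<le> 1"
proof -
  obtain k where n: "n = Suc k" using assms by (cases n) auto
  have c: "sup_abs_on (phi (Suc k)) a1 b1 \<ge> 1" "sup_abs_on (psi (Suc k)) a2 b2 \<ge> 1"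
    using orth_sup_ge1[OF f1 phi] orth_sup_ge1[OF f2 psi] by auto
  have "1 \<le> sup_abs_on (phi (Suc k)) a1 b1 * sup_abs_on (psi (Suc k)) a2 b2"
    using c mult_mono[OF c] by simp
  hence "\<bar>rho (Suc k)\<bar> * 1 \<le> bd k" unfolding bd_def mult.assoc by (intro mult_left_mono) auto
  also have "bd k \<le> (\<Sum>i<Suc k. bd i)" by (rule member_le_sum) (auto simp: bd_nonneg)
  also have "\<dots> \<le> 1" by (rule partial_bound)
  finally show ?thesis using n by simp
qed

lemma main: "pearson M X Y = rho 1 \<and> maxcorr M X Y = (SUP n\<in>{1..}. \<bar>rho n\<bar>)"
proof
  show "pearson M X Y = rho 1" by (rule pearson_XY)
  define R where "R = (SUP n\<in>{1..}. \<bar>rho n\<bar>)"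
  have bddR: "bdd_above ((\<lambda>n. \<bar>rho n\<bar>) ` {1..})" using rho_le1 by (auto intro!: bdd_aboveI[of _ 1])
  have Rn: "\<bar>rho n\<bar> \<le> R" if "n \<ge> 1" for n unfolding R_def by (rule cSUP_upper[OF _ bddR]) (use that in simp)
  define SS where "SS = {pearson M (\<lambda>\<omega>. g1 (X \<omega>)) (\<lambda>\<omega>. g2 (Y \<omega>)) | g1 g2. g1 \<in> L2star M X \<and> g2 \<in> L2star M Y}"
  have mc: "maxcorr M X Y = Sup SS" unfolding maxcorr_def SS_def ..
  have le: "x \<le> R" if "x \<in> SS" for x
    using that unfolding SS_def by (auto intro!: pearson_le Rn)
  have mem: "s * rho m \<in> SS" if "m \<ge> 1" "s * s = 1" for m s
  proof -
    note P = pearson_phi[OF that]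
    show ?thesis unfolding SS_def
      by (rule CollectI, rule exI[of _ "\<lambda>x. s * poly (phi m) x"], rule exI[of _ "\<lambda>y. poly (psi m) y"])
         (use P in simp)
  qed
  have ne: "SS \<noteq> {}" using mem[of 1 1] by auto
  have bddS: "bdd_above SS" using le by (auto intro!: bdd_aboveI)
  have "Sup SS \<le> R" by (rule cSup_least[OF ne le])
  moreover have "R \<le> Sup SS" unfolding R_def
  proof (rule cSUP_least)
    show "{1::nat..} \<noteq> {}" by auto
    fix n :: nat assume n: "n \<in> {1..}"
    have "rho n \<in> SS" "- rho n \<in> SS" using mem[of n 1] mem[of n "-1"] n by auto
    hence "rho n \<le> Sup SS" "- rho n \<le> Sup SS" using cSup_upper[OF _ bddS] by auto
    thus "\<bar>rho n\<bar> \<le> Sup SS" by (simp add: abs_le_iff)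
  qed
  ultimately show "maxcorr M X Y = (SUP n\<in>{1..}. \<bar>rho n\<bar>)" unfolding mc R_def by simp
qed

end

theorem mainTheorem3:
  fixes f1 f2 :: "real \<Rightarrow> real" and \<alpha>1 \<omega>1 \<alpha>2 \<omega>2 :: real
    and \<phi> \<psi> :: "nat \<Rightarrow> real poly" and \<rho> :: "nat \<Rightarrow> real"
    and M :: "'a measure" and X Y :: "'a \<Rightarrow> real"
  assumes f1: "bounded_support_density f1 \<alpha>1 \<omega>1"
    and f2: "bounded_support_density f2 \<alpha>2 \<omega>2"
    and \<phi>: "orthonormal_poly_system f1 \<phi>"
    and \<psi>: "orthonormal_poly_system f2 \<psi>"
    and summ: "summable (\<lambda>n. \<bar>\<rho> (Suc n)\<bar> * sup_abs_on (\<phi> (Suc n)) \<alpha>1 \<omega>1 * sup_abs_on (\<psi> (Suc n)) \<alpha>2 \<omega>2)"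
    and sum_le: "(\<Sum>n. \<bar>\<rho> (Suc n)\<bar> * sup_abs_on (\<phi> (Suc n)) \<alpha>1 \<omega>1 * sup_abs_on (\<psi> (Suc n)) \<alpha>2 \<omega>2) \<le> 1"
    and M: "prob_space M"
    and XY: "distributed M (lborel \<Otimes>\<^sub>M lborel) (\<lambda>\<omega>. (X \<omega>, Y \<omega>))
               (\<lambda>(x, y). ennreal (lancaster_density f1 f2 \<alpha>1 \<omega>1 \<alpha>2 \<omega>2 \<phi> \<psi> \<rho> x y))"
  shows "pearson M X Y = \<rho> 1 \<and> maxcorr M X Y = (SUP n\<in>{1..}. \<bar>\<rho> n\<bar>)"
proof -
  interpret lanc f1 f2 \<alpha>1 \<omega>1 \<alpha>2 \<omega>2 \<phi> \<psi> \<rho> M X Y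
    by (rule lanc.intro) (fact f1 f2 \<phi> \<psi> summ sum_le M XY)+
  show ?thesis by (rule main)
qed


end
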